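(* Let $m\ge1$, $j\in\{0,\ldots,m-1\}$ and let $M_j$ be as in the context (PNS or PNGS version). For every $z'\in M_j$ there is $\epsilon>0$ such that for all $z\in M_j$ with $\|z-z'\|<\epsilon$: $z$ and $z'$ are in optimal position (i.e. $\|z'-z\|=\min_{R\in O(m-j)}\|z'-zR\|$) if and only if $z^Tz'-z'^Tz=0$.
   Context: $\|\cdot\|$ is the Frobenius norm; $O(k,n)=\{v\in\mathbb R^{n\times k}:v^Tv=I_k\}$; $O(k)$ is the orthogonal group; $\mathbb D^k$ and $\mathbb S^{k-1}$ are the open unit ball and unit sphere of $\mathbb R^k$. For $j\in\{1,\ldots,m-1\}$, PNS version: $M_j=\{\binom{v}{\alpha^T}: v\in O(m-j,m+1),\alpha\in\mathbb D^{m-j}\}\subset\mathbb R^{(m+2)\times(m-j)}$; PNGS version: the same with $\alpha=0$. For $j=0$: $M_0=\{\binom{v}{\alpha^T}: v\in O(m,m+1),\alpha\in\mathbb S^{m-1}\}$. $O(m-j)$ acts on $M_j$ from the right by $z\mapsto zR$. *)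

theory Defs
  imports Complex_Main "Jordan_Normal_Form.Matrix"
begin

definition frob_norm :: "real mat \<Rightarrow> real" where
  "frob_norm A = sqrt (\<Sum>i<dim_row A. \<Sum>j<dim_col A. (A $$ (i,j))^2)"

definition vnorm :: "real vec \<Rightarrow> real" where
  "vnorm a = sqrt (scalar_prod a a)"

definition stiefel :: "nat \<Rightarrow> nat \<Rightarrow> real mat set" where
  "stiefel k n = {v \<in> carrier_mat n k. transpose_mat v * v = 1\<^sub>m k}"

definition orth_group :: "nat \<Rightarrow> real mat set" where
  "orth_group k = stiefel k k"

definition stack :: "real mat \<Rightarrow> real vec \<Rightarrow> real mat" where
  "stack v a = mat (dim_row v + 1) (dim_col v)
      (\<lambda>(i,l). if i < dim_row v then v $$ (i,l) else a $ l)"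

text \<open>M_j. The flag pngs selects the PNGS version (alpha = 0 for j >= 1);
  otherwise the PNS version. For j = 0 both versions use alpha in the unit sphere.\<close>
definition Mset :: "bool \<Rightarrow> nat \<Rightarrow> nat \<Rightarrow> real mat set" where
  "Mset pngs m j =
     (if j = 0 then
        {stack v a | v a. v \<in> stiefel m (m+1) \<and> a \<in> carrier_vec m \<and> vnorm a = 1}
      else if pngs then
        {stack v (0\<^sub>v (m-j)) | v. v \<in> stiefel (m-j) (m+1)}
      else
        {stack v a | v a. v \<in> stiefel (m-j) (m+1) \<and> a \<in> carrier_vec (m-j) \<and> vnorm a < 1})"

text \<open>z and z' are in optimal position: ||z' - z|| = min over R in O(k) of ||z' - z R||,
  k the number of columns (the minimum exists by compactness of O(k); it is
  expressed here as the infimum).\<close>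
definition optimal_position :: "real mat \<Rightarrow> real mat \<Rightarrow> bool" where
  "optimal_position z z' \<longleftrightarrow>
     frob_norm (z' - z) = (INF R \<in> orth_group (dim_col z). frob_norm (z' - z * R))"

end

theory Submission
  imports Defs "Jordan_Normal_Form.Determinant"
begin

lemma CS_sum:
  fixes a :: "'a \<Rightarrow> real"
  shows "(\<Sum>i\<in>I. a i * b i)\<^sup>2 \<le> (\<Sum>i\<in>I. (a i)\<^sup>2) * (\<Sum>i\<in>I. (b i)\<^sup>2)"
proof (cases "(\<Sum>i\<in>I. (b i)\<^sup>2) > 0")
  case False
  then consider "\<And>i. i\<in>I \<Longrightarrow> b i = 0" | "infinite I"
    by (metis (mono_tags, lifting) sum_pos2 zero_le_power2 zero_less_power2)
  thus ?thesis
    by fastforce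
next
  case True
  define r where "r \<equiv> (\<Sum>i\<in>I. a i * b i) / (\<Sum>i\<in>I. (b i)\<^sup>2)"
  have "0 \<le> (\<Sum>i\<in>I. (a i - r * b i)\<^sup>2)"
    by (simp add: sum_nonneg)
  also have "... = (\<Sum>i\<in>I. (a i)\<^sup>2) - 2 * r * (\<Sum>i\<in>I. a i * b i) + r\<^sup>2 * (\<Sum>i\<in>I. (b i)\<^sup>2)"
    by (simp add: algebra_simps power2_eq_square sum_distrib_left flip: sum.distrib)
  also have "\<dots> = (\<Sum>i\<in>I. (a i)\<^sup>2) - ((\<Sum>i\<in>I. a i * b i))\<^sup>2 / (\<Sum>i\<in>I. (b i)\<^sup>2)"
    by (simp add: r_def power2_eq_square)
  finally have "0 \<le> (\<Sum>i\<in>I. (a i)\<^sup>2) - ((\<Sum>i\<in>I. a i * b i))\<^sup>2 / (\<Sum>i\<in>I. (b i)\<^sup>2)" .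
  hence "((\<Sum>i\<in>I. a i * b i))\<^sup>2 / (\<Sum>i\<in>I. (b i)\<^sup>2) \<le> (\<Sum>i\<in>I. (a i)\<^sup>2)"
    by (simp add: le_diff_eq)
  thus "((\<Sum>i\<in>I. a i * b i))\<^sup>2 \<le> (\<Sum>i\<in>I. (a i)\<^sup>2) * (\<Sum>i\<in>I. (b i)\<^sup>2)"
    by (simp add: pos_divide_le_eq True)
qed

definition SS :: "(nat\<Rightarrow>nat\<Rightarrow>real) \<Rightarrow> (nat\<Rightarrow>nat\<Rightarrow>real) \<Rightarrow> (nat\<Rightarrow>nat\<Rightarrow>real) \<Rightarrow> nat \<Rightarrow> nat \<Rightarrow> real" where
  "SS Z' Z R n k = (\<Sum>i<n. \<Sum>l<k. (Z' i l - (\<Sum>p<k. Z i p * R p l))\<^sup>2)"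

definition AA :: "(nat\<Rightarrow>nat\<Rightarrow>real) \<Rightarrow> (nat\<Rightarrow>nat\<Rightarrow>real) \<Rightarrow> nat \<Rightarrow> nat \<Rightarrow> nat \<Rightarrow> real" where
  "AA Z' Z n p q = (\<Sum>i<n. Z' i p * Z i q)"

lemma sum_swap3: "(\<Sum>l\<in>A. \<Sum>p\<in>B. \<Sum>q\<in>C. f l p q) = (\<Sum>p\<in>B. \<Sum>q\<in>C. \<Sum>l\<in>A. f l p q)"
proof -
  have "(\<Sum>l\<in>A. \<Sum>p\<in>B. \<Sum>q\<in>C. f l p q) = (\<Sum>p\<in>B. \<Sum>l\<in>A. \<Sum>q\<in>C. f l p q)" by (rule sum.swap)
  also have "\<dots> = (\<Sum>p\<in>B. \<Sum>q\<in>C. \<Sum>l\<in>A. f l p q)" by (rule sum.cong[OF refl], rule sum.swap)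
  finally show ?thesis .
qed

lemma SS_expand:
  assumes RRT: "\<And>p q. p<k \<Longrightarrow> q<k \<Longrightarrow> (\<Sum>l<k. R p l * R q l) = (if p=q then 1 else 0)"
  shows "SS Z' Z R n k = (\<Sum>i<n. \<Sum>l<k. (Z' i l)\<^sup>2) - 2*(\<Sum>l<k. \<Sum>p<k. AA Z' Z n l p * R p l)
          + (\<Sum>i<n. \<Sum>p<k. (Z i p)\<^sup>2)"
proof -
  have sq: "(\<Sum>l<k. (\<Sum>p<k. Z i p * R p l)\<^sup>2) = (\<Sum>p<k. (Z i p)\<^sup>2)" for i
  proof -
    have "(\<Sum>l<k. (\<Sum>p<k. Z i p * R p l)\<^sup>2)
        = (\<Sum>l<k. \<Sum>p<k. \<Sum>q<k. Z i p * Z i q * (R p l * R q l))"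
      by (rule sum.cong[OF refl]) (simp only: power2_eq_square sum_product mult_ac)
    also have "\<dots> = (\<Sum>p<k. \<Sum>q<k. Z i p * Z i q * (\<Sum>l<k. R p l * R q l))"
      by (subst sum_swap3) (simp only: sum_distrib_left)
    also have "\<dots> = (\<Sum>p<k. \<Sum>q<k. if q = p then Z i p * Z i p else 0)"
      by (intro sum.cong refl) (auto simp: RRT)
    also have "\<dots> = (\<Sum>p<k. (Z i p)\<^sup>2)"
      by (simp add: power2_eq_square)
    finally show ?thesis .
  qed
  have cross: "(\<Sum>i<n. \<Sum>l<k. Z' i l * (\<Sum>p<k. Z i p * R p l)) = (\<Sum>l<k. \<Sum>p<k. AA Z' Z n l p * R p l)"
  proof -
    have "(\<Sum>i<n. \<Sum>l<k. Z' i l * (\<Sum>p<k. Z i p * R p l)) = (\<Sum>i<n. \<Sum>l<k. \<Sum>p<k. Z' i l * Z i p * R p l)"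
      by (simp add: sum_distrib_left mult.assoc)
    also have "\<dots> = (\<Sum>l<k. \<Sum>p<k. \<Sum>i<n. Z' i l * Z i p * R p l)"
      by (subst sum.swap, subst (2) sum.swap, simp)
    also have "\<dots> = (\<Sum>l<k. \<Sum>p<k. AA Z' Z n l p * R p l)"
      by (simp add: AA_def sum_distrib_right)
    finally show ?thesis .
  qed
  have "SS Z' Z R n k = (\<Sum>i<n. \<Sum>l<k. (Z' i l)\<^sup>2 - 2 * (Z' i l * (\<Sum>p<k. Z i p * R p l)) + (\<Sum>p<k. Z i p * R p l)\<^sup>2)"
    unfolding SS_def by (intro sum.cong refl) (simp add: power2_diff mult.assoc)
  also have "\<dots> = (\<Sum>i<n. \<Sum>l<k. (Z' i l)\<^sup>2) - 2*(\<Sum>i<n. \<Sum>l<k. Z' i l * (\<Sum>p<k. Z i p * R p l))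
          + (\<Sum>i<n. \<Sum>l<k. (\<Sum>p<k. Z i p * R p l)\<^sup>2)"
    by (simp add: sum.distrib sum_subtractf sum_distrib_left)
  finally show ?thesis by (simp add: sq cross)
qed
lemma aux_lin: "(x::real) = a - s - s \<Longrightarrow> a = 2 * b \<Longrightarrow> x = 2 * b - 2 * s"
  by simp

lemma quad_id:
  fixes A R :: "nat \<Rightarrow> nat \<Rightarrow> real"
  assumes RTR: "\<And>p q. p<k \<Longrightarrow> q<k \<Longrightarrow> (\<Sum>r<k. R r p * R r q) = (if p=q then 1 else 0)"
    and sym: "\<And>p q. p<k \<Longrightarrow> q<k \<Longrightarrow> A p q = A q p"
  shows "(\<Sum>r<k. \<Sum>p<k. \<Sum>q<k. A p q * ((if r=p then 1 else 0) - R r p) * ((if r=q then 1 else 0) - R r q))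
     = 2*(\<Sum>p<k. A p p) - 2*(\<Sum>l<k. \<Sum>p<k. A l p * R p l)"
proof -
  have inner: "(\<Sum>r<k. A p q * ((if r=p then 1 else 0) - R r p) * ((if r=q then 1 else 0) - R r q))
     = A p q * ((if p = q then 2 else 0) - R p q - R q p)" if "p<k" "q<k" for p q
  proof -
    have pt: "A p q * ((if r=p then 1 else 0) - R r p) * ((if r=q then 1 else 0) - R r q)
       = A p q * ((if r = p then (if p = q then 1 else 0) else 0) - (if r = p then R r q else 0)
           - (if r = q then R r p else 0) + R r p * R r q)" for r
      by (auto simp: algebra_simps)
    have "(\<Sum>r<k. A p q * ((if r=p then 1 else 0) - R r p) * ((if r=q then 1 else 0) - R r q))
      = A p q * (\<Sum>r<k. (if r = p then (if p = q then 1 else 0) else 0) - (if r = p then R r q else 0)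
           - (if r = q then R r p else 0) + R r p * R r q)"
      by (simp only: pt sum_distrib_left)
    also have "\<dots> = A p q * ((\<Sum>r<k. (if r = p then (if p = q then 1 else 0) else 0)) - (\<Sum>r<k. if r = p then R r q else 0)
          - (\<Sum>r<k. if r = q then R r p else 0) + (\<Sum>r<k. R r p * R r q))"
      by (simp only: sum.distrib sum_subtractf)
    also have "\<dots> = A p q * ((if p = q then 2 else 0) - R p q - R q p)"
      using that by (simp add: RTR)
    finally show ?thesis .
  qed
  have "(\<Sum>r<k. \<Sum>p<k. \<Sum>q<k. A p q * ((if r=p then 1 else 0) - R r p) * ((if r=q then 1 else 0) - R r q))
     = (\<Sum>p<k. \<Sum>q<k. \<Sum>r<k. A p q * ((if r=p then 1 else 0) - R r p) * ((if r=q then 1 else 0) - R r q))"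
    by (subst sum.swap, subst (2) sum.swap, simp)
  also have "\<dots> = (\<Sum>p<k. \<Sum>q<k. A p q * ((if p = q then 2 else 0) - R p q - R q p))"
    by (intro sum.cong refl) (simp add: inner)
  also have "\<dots> = (\<Sum>p<k. \<Sum>q<k. (if p = q then 2 * A p q else 0) - A p q * R p q - A p q * R q p)"
    by (intro sum.cong refl) (auto simp: algebra_simps)
  also have "\<dots> = (\<Sum>p<k. \<Sum>q<k. (if p = q then 2 * A p q else 0)) - (\<Sum>p<k. \<Sum>q<k. A p q * R p q) - (\<Sum>p<k. \<Sum>q<k. A p q * R q p)"
    by (simp only: sum_subtractf)
  also have "(\<Sum>p<k. \<Sum>q<k. (if p = q then 2 * A p q else 0)) = (\<Sum>p<k. 2 * A p p)"
    by (intro sum.cong refl) simp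
  also have "(\<Sum>p<k. \<Sum>q<k. A p q * R p q) = (\<Sum>p<k. \<Sum>q<k. A q p * R p q)"
    by (intro sum.cong refl) (simp add: sym)
  also have "\<dots> = (\<Sum>l<k. \<Sum>p<k. A l p * R p l)"
    by (rule sum.swap)
  finally have fin: "(\<Sum>r<k. \<Sum>p<k. \<Sum>q<k. A p q * ((if r=p then 1 else 0) - R r p) * ((if r=q then 1 else 0) - R r q))
     = (\<Sum>p<k. 2 * A p p) - (\<Sum>l<k. \<Sum>p<k. A l p * R p l) - (\<Sum>l<k. \<Sum>p<k. A l p * R p l)" .
  have "(\<Sum>p<k. 2 * A p p) = 2 * (\<Sum>p<k. A p p)" by (rule sum_distrib_left[symmetric])
  from aux_lin[OF fin this] show ?thesis .
qed

lemma quad_form: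
  "(\<Sum>p<k. \<Sum>q<k. AA Z' Z n p q * x p * x q) = (\<Sum>i<n. (\<Sum>p<k. Z' i p * x p) * (\<Sum>q<k. Z i q * x q))"
proof -
  have "(\<Sum>p<k. \<Sum>q<k. AA Z' Z n p q * x p * x q) = (\<Sum>p<k. \<Sum>q<k. \<Sum>i<n. Z' i p * x p * (Z i q * x q))"
    by (simp add: AA_def sum_distrib_right sum_distrib_left algebra_simps)
  also have "\<dots> = (\<Sum>i<n. \<Sum>p<k. \<Sum>q<k. Z' i p * x p * (Z i q * x q))"
    by (subst (2) sum.swap, subst sum.swap, simp)
  also have "\<dots> = (\<Sum>i<n. (\<Sum>p<k. Z' i p * x p) * (\<Sum>q<k. Z i q * x q))"
    by (simp add: sum_product)
  finally show ?thesis .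
qed

lemma dir2:
  assumes RRT: "\<And>p q. p<k \<Longrightarrow> q<k \<Longrightarrow> (\<Sum>l<k. R p l * R q l) = (if p=q then 1 else 0)"
    and RTR: "\<And>p q. p<k \<Longrightarrow> q<k \<Longrightarrow> (\<Sum>r<k. R r p * R r q) = (if p=q then 1 else 0)"
    and sym: "\<And>p q. p<k \<Longrightarrow> q<k \<Longrightarrow> AA Z' Z n p q = AA Z' Z n q p"
    and psd: "\<And>x. 0 \<le> (\<Sum>i<n. (\<Sum>p<k. Z' i p * x p) * (\<Sum>q<k. Z i q * x q))"
  shows "SS Z' Z (\<lambda>p l. if p = l then 1 else 0) n k \<le> SS Z' Z R n k"
proof -
  let ?D = "\<lambda>p l. if p = l then 1 else (0::real)"
  have e1: "SS Z' Z ?D n k = (\<Sum>i<n. \<Sum>l<k. (Z' i l)\<^sup>2) - 2*(\<Sum>l<k. \<Sum>p<k. AA Z' Z n l p * ?D p l)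
          + (\<Sum>i<n. \<Sum>p<k. (Z i p)\<^sup>2)"
  proof (rule SS_expand)
    fix p q assume "p < k" "q < k"
    have "(\<Sum>l<k. ?D p l * ?D q l) = (\<Sum>l<k. if l = p then ?D q p else 0)" by (rule sum.cong) auto
    then show "(\<Sum>l<k. ?D p l * ?D q l) = ?D p q" using \<open>p<k\<close> by simp
  qed
  have e2: "(\<Sum>l<k. \<Sum>p<k. AA Z' Z n l p * ?D p l) = (\<Sum>l<k. AA Z' Z n l l)"
    by (simp add: if_distrib cong: if_cong)
  have "SS Z' Z R n k - SS Z' Z ?D n k = 2*(\<Sum>l<k. AA Z' Z n l l) - 2*(\<Sum>l<k. \<Sum>p<k. AA Z' Z n l p * R p l)"
    using SS_expand[of k R Z' Z n, OF RRT] e1 e2 by simp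
  also have "\<dots> = (\<Sum>r<k. \<Sum>p<k. \<Sum>q<k. AA Z' Z n p q * ((if r=p then 1 else 0) - R r p) * ((if r=q then 1 else 0) - R r q))"
    by (rule quad_id[symmetric]) (use RTR sym in auto)
  also have "\<dots> \<ge> 0"
  proof (rule sum_nonneg)
    fix r
    show "0 \<le> (\<Sum>p<k. \<Sum>q<k. AA Z' Z n p q * ((if r=p then 1 else 0) - R r p) * ((if r=q then 1 else 0) - R r q))"
      using quad_form[where x="\<lambda>p. (if r = p then 1 else 0) - R r p"] psd by simp
  qed
  finally show ?thesis by simp
qed
lemma psd:
  fixes Z Z' :: "nat \<Rightarrow> nat \<Rightarrow> real"
  assumes close: "(\<Sum>i<n. \<Sum>p<k. (Z i p - Z' i p)\<^sup>2) \<le> 1"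
    and lower: "(\<Sum>p<k. (x p)\<^sup>2) \<le> (\<Sum>i<n. (\<Sum>p<k. Z' i p * x p)\<^sup>2)"
  shows "0 \<le> (\<Sum>i<n. (\<Sum>p<k. Z' i p * x p) * (\<Sum>q<k. Z i q * x q))"
proof -
  define a where "a i = (\<Sum>p<k. Z' i p * x p)" for i
  define b where "b i = (\<Sum>q<k. Z i q * x q)" for i
  have diff: "b i - a i = (\<Sum>p<k. (Z i p - Z' i p) * x p)" for i
    by (simp add: a_def b_def sum_subtractf left_diff_distrib)
  have "(\<Sum>i<n. (b i - a i)\<^sup>2) \<le> (\<Sum>i<n. (\<Sum>p<k. (Z i p - Z' i p)\<^sup>2) * (\<Sum>p<k. (x p)\<^sup>2))"
    by (intro sum_mono) (simp add: diff CS_sum)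
  also have "\<dots> = (\<Sum>i<n. \<Sum>p<k. (Z i p - Z' i p)\<^sup>2) * (\<Sum>p<k. (x p)\<^sup>2)"
    by (simp add: sum_distrib_right)
  also have "\<dots> \<le> 1 * (\<Sum>p<k. (x p)\<^sup>2)"
    by (intro mult_right_mono close sum_nonneg) simp
  also have "\<dots> \<le> (\<Sum>i<n. (a i)\<^sup>2)" using lower by (simp add: a_def)
  finally have h: "(\<Sum>i<n. (b i - a i)\<^sup>2) \<le> (\<Sum>i<n. (a i)\<^sup>2)" .
  have "(\<Sum>i<n. (b i - a i)\<^sup>2) = (\<Sum>i<n. (b i)\<^sup>2) - 2 * (\<Sum>i<n. a i * b i) + (\<Sum>i<n. (a i)\<^sup>2)"
    by (simp add: power2_diff sum.distrib sum_subtractf sum_distrib_left algebra_simps)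
  with h have "(\<Sum>i<n. (b i)\<^sup>2) \<le> 2 * (\<Sum>i<n. a i * b i)" by simp
  moreover have "0 \<le> (\<Sum>i<n. (b i)\<^sup>2)" by (simp add: sum_nonneg)
  ultimately have "0 \<le> (\<Sum>i<n. a i * b i)" by simp
  then show ?thesis by (simp add: a_def b_def)
qed

definition G :: "real \<Rightarrow> real \<Rightarrow> nat \<Rightarrow> nat \<Rightarrow> nat \<Rightarrow> nat \<Rightarrow> real" where
  "G c s a b p l = (if p = l then (if p = a \<or> p = b then c else 1)
      else if p = b \<and> l = a then s else if p = a \<and> l = b then -s else 0)"

lemma G_decomp: "a \<noteq> b \<Longrightarrow> G c s a b p l = (if p = l then (if l = a \<or> l = b then c else 1) else 0)
   + (if p = b then (if l = a then s else 0) else 0) + (if p = a then (if l = b then -s else 0) else 0)"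
  by (auto simp: G_def)

lemma Gcol:
  assumes "a \<noteq> b" "a < k" "b < k" "l < k"
  shows "(\<Sum>p<k. f p * G c s a b p l) = (if l = a then c * f a + s * f b else if l = b then c * f b - s * f a else f l)"
proof -
  have "(\<Sum>p<k. f p * G c s a b p l) = (\<Sum>p<k. (if p = l then f l * (if l = a \<or> l = b then c else 1) else 0)
     + (if p = b then f b * (if l = a then s else 0) else 0) + (if p = a then f a * (if l = b then -s else 0) else 0))"
    by (intro sum.cong refl) (simp add: G_decomp[OF assms(1)] distrib_left)
  also have "\<dots> = f l * (if l = a \<or> l = b then c else 1) + f b * (if l = a then s else 0) + f a * (if l = b then -s else 0)"
    using assms by (simp add: sum.distrib)
  also have "\<dots> = (if l = a then c * f a + s * f b else if l = b then c * f b - s * f a else f l)"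
    using assms by auto
  finally show ?thesis .
qed

lemma G_RTR:
  assumes "a \<noteq> b" "a < k" "b < k" "c\<^sup>2 + s\<^sup>2 = 1" "p < k" "q < k"
  shows "(\<Sum>r<k. G c s a b r p * G c s a b r q) = (if p = q then 1 else 0)"
proof -
  have "(\<Sum>r<k. G c s a b r p * G c s a b r q) = (if q = a then c * G c s a b a p + s * G c s a b b p
      else if q = b then c * G c s a b b p - s * G c s a b a p else G c s a b q p)"
    by (rule Gcol) (use assms in auto)
  also have "\<dots> = (if p = q then 1 else 0)"
    using assms by (auto simp: G_def power2_eq_square algebra_simps)
  finally show ?thesis .
qed

lemma G_T: "G c s a b l p = G c (-s) a b p l"
  by (auto simp: G_def)

lemma G_RRT:
  assumes "a \<noteq> b" "a < k" "b < k" "c\<^sup>2 + s\<^sup>2 = 1" "p < k" "q < k"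
  shows "(\<Sum>l<k. G c s a b p l * G c s a b q l) = (if p = q then 1 else 0)"
  using G_RTR[of a b k c "-s" p q] assms by (simp add: G_T[of c s a b p] G_T[of c s a b q])

lemma G_diff:
  assumes ab: "a \<noteq> b" "a < k" "b < k" and cs: "c\<^sup>2 + s\<^sup>2 = 1"
  shows "SS Z' Z (G c s a b) n k - SS Z' Z (\<lambda>p l. if p = l then 1 else 0) n k
     = -2 * ((c - 1) * (AA Z' Z n a a + AA Z' Z n b b) + s * (AA Z' Z n a b - AA Z' Z n b a))"
proof -
  let ?D = "\<lambda>p l. if p = l then 1 else (0::real)"
  let ?A = "AA Z' Z n"
  have e1: "SS Z' Z ?D n k = (\<Sum>i<n. \<Sum>l<k. (Z' i l)\<^sup>2) - 2*(\<Sum>l<k. \<Sum>p<k. ?A l p * ?D p l)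
          + (\<Sum>i<n. \<Sum>p<k. (Z i p)\<^sup>2)"
  proof (rule SS_expand)
    fix p q assume "p < k" "q < k"
    have "(\<Sum>l<k. ?D p l * ?D q l) = (\<Sum>l<k. if l = p then ?D q p else 0)" by (rule sum.cong) auto
    then show "(\<Sum>l<k. ?D p l * ?D q l) = ?D p q" using \<open>p<k\<close> by simp
  qed
  have e2: "(\<Sum>l<k. \<Sum>p<k. ?A l p * ?D p l) = (\<Sum>l<k. ?A l l)"
    by (simp add: if_distrib cong: if_cong)
  have e3: "SS Z' Z (G c s a b) n k = (\<Sum>i<n. \<Sum>l<k. (Z' i l)\<^sup>2) - 2*(\<Sum>l<k. \<Sum>p<k. ?A l p * G c s a b p l)
          + (\<Sum>i<n. \<Sum>p<k. (Z i p)\<^sup>2)"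
    by (rule SS_expand) (use G_RRT[OF ab cs] in auto)
  have "(\<Sum>l<k. \<Sum>p<k. ?A l p * G c s a b p l) = (\<Sum>l<k. ?A l l + (if l = a then (c - 1) * ?A a a + s * ?A a b else 0)
      + (if l = b then (c - 1) * ?A b b - s * ?A b a else 0))"
  proof (intro sum.cong refl)
    fix l assume "l \<in> {..<k}"
    then have "(\<Sum>p<k. ?A l p * G c s a b p l) = (if l = a then c * ?A l a + s * ?A l b else if l = b then c * ?A l b - s * ?A l a else ?A l l)"
      using ab by (intro Gcol) auto
    then show "(\<Sum>p<k. ?A l p * G c s a b p l) = ?A l l + (if l = a then (c - 1) * ?A a a + s * ?A a b else 0)
      + (if l = b then (c - 1) * ?A b b - s * ?A b a else 0)"
      using ab by (auto simp: algebra_simps)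
  qed
  also have "\<dots> = (\<Sum>l<k. ?A l l) + ((c - 1) * ?A a a + s * ?A a b) + ((c - 1) * ?A b b - s * ?A b a)"
    using ab by (simp add: sum.distrib)
  finally have e4: "(\<Sum>l<k. \<Sum>p<k. ?A l p * G c s a b p l) = (\<Sum>l<k. ?A l l) + ((c - 1) * ?A a a + s * ?A a b) + ((c - 1) * ?A b b - s * ?A b a)" .
  show ?thesis using e1 e2 e3 e4 by (simp add: algebra_simps)
qed

lemma choose_cs:
  fixes T d :: real
  assumes "d \<noteq> 0"
  shows "\<exists>c s. c\<^sup>2 + s\<^sup>2 = 1 \<and> (c - 1) * T + s * d > 0"
proof -
  define e where "e = min (1/2) (\<bar>d\<bar> / (2 * (\<bar>T\<bar> + 1)))"
  have dpos: "\<bar>d\<bar> > 0" using assms by simp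
  have e0: "e > 0" using dpos by (simp add: e_def)
  have e1: "e \<le> 1/2" unfolding e_def by (rule min.cobounded1)
  have e2: "e \<le> \<bar>d\<bar> / (2 * (\<bar>T\<bar> + 1))" by (simp add: e_def)
  have eT: "e * \<bar>T\<bar> < \<bar>d\<bar>"
  proof -
    have "e * (2 * (\<bar>T\<bar> + 1)) \<le> \<bar>d\<bar>" using e2 by (simp add: pos_le_divide_eq)
    moreover have "e * \<bar>T\<bar> < e * (2 * (\<bar>T\<bar> + 1))" by (intro mult_strict_left_mono) (use e0 in auto)
    ultimately show ?thesis by linarith
  qed
  define c where "c = sqrt (1 - e\<^sup>2)"
  define s where "s = e * sgn d"
  have "e * e \<le> 1 * 1" by (intro mult_mono) (use e0 e1 in auto)
  then have e2le: "e\<^sup>2 \<le> 1" by (simp add: power2_eq_square)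
  have c2: "c\<^sup>2 = 1 - e\<^sup>2" using e2le by (simp add: c_def)
  have s2: "s\<^sup>2 = e\<^sup>2" using assms by (simp add: s_def power_mult_distrib sgn_if)
  have c0: "0 \<le> c" using e2le by (simp add: c_def)
  have c1: "c \<le> 1" using e2le by (simp add: c_def)
  have cge: "1 - e\<^sup>2 \<le> c"
  proof -
    have "c * c \<le> c * 1" using c0 c1 by (intro mult_left_mono) auto
    then show ?thesis using c2 by (simp add: power2_eq_square)
  qed
  have sd: "s * d = e * \<bar>d\<bar>" by (simp add: s_def abs_sgn mult.commute mult.left_commute sgn_mult_abs)
  have "(c - 1) * T \<ge> - (e\<^sup>2 * \<bar>T\<bar>)"
  proof -
    have "\<bar>(c - 1) * T\<bar> = (1 - c) * \<bar>T\<bar>" using c1 by (simp add: abs_mult)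
    also have "\<dots> \<le> e\<^sup>2 * \<bar>T\<bar>" using cge by (intro mult_right_mono) auto
    finally show ?thesis by linarith
  qed
  moreover have "e\<^sup>2 * \<bar>T\<bar> < e * \<bar>d\<bar>"
    using eT e0 by (simp add: power2_eq_square mult.assoc)
  ultimately have "(c - 1) * T + s * d > 0" using sd by linarith
  then show ?thesis using c2 s2 by (intro exI[of _ c] exI[of _ s]) simp
qed

lemma dir1:
  assumes ab: "a \<noteq> b" "a < k" "b < k" and ne: "AA Z' Z n a b \<noteq> AA Z' Z n b a"
  shows "\<exists>c s. c\<^sup>2 + s\<^sup>2 = 1 \<and> SS Z' Z (G c s a b) n k < SS Z' Z (\<lambda>p l. if p = l then 1 else 0) n k"
proof -
  obtain c s where cs: "c\<^sup>2 + s\<^sup>2 = 1" and pos: "(c - 1) * (AA Z' Z n a a + AA Z' Z n b b) + s * (AA Z' Z n a b - AA Z' Z n b a) > 0"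
    using choose_cs[of "AA Z' Z n a b - AA Z' Z n b a" "AA Z' Z n a a + AA Z' Z n b b"] ne by auto
  show ?thesis using G_diff[OF ab cs, of Z' Z n] pos cs by (intro exI[of _ c] exI[of _ s]) simp
qed


lemma norm_pres:
  fixes V :: "nat \<Rightarrow> nat \<Rightarrow> real"
  assumes VTV: "\<And>p q. p<k \<Longrightarrow> q<k \<Longrightarrow> (\<Sum>i<N. V i p * V i q) = (if p=q then 1 else 0)"
  shows "(\<Sum>i<N. (\<Sum>p<k. V i p * x p)\<^sup>2) = (\<Sum>p<k. (x p)\<^sup>2)"
proof -
  have "(\<Sum>i<N. (\<Sum>p<k. V i p * x p)\<^sup>2) = (\<Sum>i<N. \<Sum>p<k. \<Sum>q<k. x p * x q * (V i p * V i q))"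
    by (simp add: power2_eq_square sum_product algebra_simps)
  also have "\<dots> = (\<Sum>p<k. \<Sum>q<k. x p * x q * (\<Sum>i<N. V i p * V i q))"
    by (simp add: sum_distrib_left, subst sum.swap, subst (2) sum.swap, simp)
  also have "\<dots> = (\<Sum>p<k. \<Sum>q<k. if q = p then x p * x p else 0)"
    by (intro sum.cong refl) (auto simp: VTV)
  also have "\<dots> = (\<Sum>p<k. (x p)\<^sup>2)"
    by (simp add: power2_eq_square)
  finally show ?thesis .
qed

lemma SS_cong:
  assumes "\<And>i l. i<n \<Longrightarrow> l<k \<Longrightarrow> Z1' i l = Z2' i l"
    and "\<And>i l. i<n \<Longrightarrow> l<k \<Longrightarrow> Z1 i l = Z2 i l"
    and "\<And>i l. i<k \<Longrightarrow> l<k \<Longrightarrow> R1 i l = R2 i l"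
  shows "SS Z1' Z1 R1 n k = SS Z2' Z2 R2 n k"
  unfolding SS_def using assms by (intro sum.cong refl) auto

lemma mult_entry:
  fixes A B :: "real mat"
  assumes "A \<in> carrier_mat n k" "B \<in> carrier_mat k r" "i < n" "l < r"
  shows "(A * B) $$ (i,l) = (\<Sum>p<k. A $$ (i,p) * B $$ (p,l))"
  using assms by (simp add: scalar_prod_def atLeast0LessThan)

lemma frob_SS:
  fixes z z' R :: "real mat"
  assumes "z \<in> carrier_mat n k" "z' \<in> carrier_mat n k" "R \<in> carrier_mat k k"
  shows "frob_norm (z' - z * R) = sqrt (SS (\<lambda>i l. z' $$ (i,l)) (\<lambda>i l. z $$ (i,l)) (\<lambda>i l. R $$ (i,l)) n k)"
  unfolding frob_norm_def SS_def using assms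
  by (intro arg_cong[where f=sqrt] sum.cong refl) (simp_all add: mult_entry[OF assms(1) assms(3)] del: index_mult_mat(1))

lemma frob_SS1:
  fixes z z' :: "real mat"
  assumes "z \<in> carrier_mat n k" "z' \<in> carrier_mat n k"
  shows "frob_norm (z' - z) = sqrt (SS (\<lambda>i l. z' $$ (i,l)) (\<lambda>i l. z $$ (i,l)) (\<lambda>p l. if p = l then 1 else 0) n k)"
proof -
  have "frob_norm (z' - z) = frob_norm (z' - z * 1\<^sub>m k)" using assms by (simp add: right_mult_one_mat)
  also have "\<dots> = sqrt (SS (\<lambda>i l. z' $$ (i,l)) (\<lambda>i l. z $$ (i,l)) (\<lambda>i l. 1\<^sub>m k $$ (i,l)) n k)"
    using assms by (intro frob_SS) auto
  also have "SS (\<lambda>i l. z' $$ (i,l)) (\<lambda>i l. z $$ (i,l)) (\<lambda>i l. 1\<^sub>m k $$ (i,l)) n k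
     = SS (\<lambda>i l. z' $$ (i,l)) (\<lambda>i l. z $$ (i,l)) (\<lambda>p l. if p = l then 1 else 0) n k"
    by (rule SS_cong) auto
  finally show ?thesis .
qed

lemma frob_diff:
  fixes z z' :: "real mat"
  assumes "z \<in> carrier_mat n k" "z' \<in> carrier_mat n k"
  shows "frob_norm (z - z') = sqrt (\<Sum>i<n. \<Sum>p<k. (z $$ (i,p) - z' $$ (i,p))\<^sup>2)"
  unfolding frob_norm_def using assms by simp

lemma transp_cond:
  fixes z z' :: "real mat"
  assumes "z \<in> carrier_mat n k" "z' \<in> carrier_mat n k"
  shows "(transpose_mat z * z' - transpose_mat z' * z = 0\<^sub>m k k) \<longleftrightarrow>
    (\<forall>p q. p<k \<longrightarrow> q<k \<longrightarrow> AA (\<lambda>i l. z' $$ (i,l)) (\<lambda>i l. z $$ (i,l)) n p q = AA (\<lambda>i l. z' $$ (i,l)) (\<lambda>i l. z $$ (i,l)) n q p)"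
proof -
  have e: "(transpose_mat z * z' - transpose_mat z' * z) $$ (p,q) = AA (\<lambda>i l. z' $$ (i,l)) (\<lambda>i l. z $$ (i,l)) n q p - AA (\<lambda>i l. z' $$ (i,l)) (\<lambda>i l. z $$ (i,l)) n p q"
    if "p<k" "q<k" for p q
  proof -
    have c1: "transpose_mat z \<in> carrier_mat k n" "transpose_mat z' \<in> carrier_mat k n" using assms by auto
    show ?thesis using that assms
      by (simp add: mult_entry[OF c1(1) assms(2)] mult_entry[OF c1(2) assms(1)] AA_def mult.commute del: index_mult_mat(1))
  qed
  have d: "dim_row (transpose_mat z * z' - transpose_mat z' * z) = k" "dim_col (transpose_mat z * z' - transpose_mat z' * z) = k"
    using assms by auto
  show ?thesis
  proof
    assume h: "transpose_mat z * z' - transpose_mat z' * z = 0\<^sub>m k k"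
    show "\<forall>p q. p<k \<longrightarrow> q<k \<longrightarrow> AA (\<lambda>i l. z' $$ (i,l)) (\<lambda>i l. z $$ (i,l)) n p q = AA (\<lambda>i l. z' $$ (i,l)) (\<lambda>i l. z $$ (i,l)) n q p"
    proof (intro allI impI)
      fix p q assume pq: "p<k" "q<k"
      have "(transpose_mat z * z' - transpose_mat z' * z) $$ (p,q) = 0" using h pq by simp
      then show "AA (\<lambda>i l. z' $$ (i,l)) (\<lambda>i l. z $$ (i,l)) n p q = AA (\<lambda>i l. z' $$ (i,l)) (\<lambda>i l. z $$ (i,l)) n q p"
        using e[OF pq] by simp
    qed
  next
    assume h: "\<forall>p q. p<k \<longrightarrow> q<k \<longrightarrow> AA (\<lambda>i l. z' $$ (i,l)) (\<lambda>i l. z $$ (i,l)) n p q = AA (\<lambda>i l. z' $$ (i,l)) (\<lambda>i l. z $$ (i,l)) n q p"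
    show "transpose_mat z * z' - transpose_mat z' * z = 0\<^sub>m k k"
      by (rule eq_matI) (use d e h in auto)
  qed
qed

lemma orth_RTR:
  fixes R :: "real mat"
  assumes "R \<in> orth_group k" "p<k" "q<k"
  shows "(\<Sum>r<k. R $$ (r,p) * R $$ (r,q)) = (if p = q then 1 else 0)"
proof -
  have R: "R \<in> carrier_mat k k" "transpose_mat R * R = 1\<^sub>m k"
    using assms(1) by (auto simp: orth_group_def stiefel_def)
  have c1: "transpose_mat R \<in> carrier_mat k k" using R by auto
  have "(\<Sum>r<k. R $$ (r,p) * R $$ (r,q)) = (transpose_mat R * R) $$ (p,q)"
    by (subst mult_entry[OF c1 R(1) assms(2,3)]) (intro sum.cong, use R(1) assms in auto)
  also have "\<dots> = (if p = q then 1 else 0)" using R(2) assms by simp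
  finally show ?thesis .
qed

lemma orth_RRT:
  fixes R :: "real mat"
  assumes "R \<in> orth_group k" "p<k" "q<k"
  shows "(\<Sum>l<k. R $$ (p,l) * R $$ (q,l)) = (if p = q then 1 else 0)"
proof -
  have R: "R \<in> carrier_mat k k" "transpose_mat R * R = 1\<^sub>m k"
    using assms(1) by (auto simp: orth_group_def stiefel_def)
  have c1: "transpose_mat R \<in> carrier_mat k k" using R by auto
  have RR: "R * transpose_mat R = 1\<^sub>m k" by (rule mat_mult_left_right_inverse[OF c1 R(1) R(2)])
  have "(\<Sum>l<k. R $$ (p,l) * R $$ (q,l)) = (R * transpose_mat R) $$ (p,q)"
    by (subst mult_entry[OF R(1) c1 assms(2,3)]) (intro sum.cong, use R(1) assms in auto)
  also have "\<dots> = (if p = q then 1 else 0)" using RR assms by simp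
  finally show ?thesis .
qed

lemma G_orth:
  assumes "a \<noteq> b" "a < k" "b < k" "c\<^sup>2 + s\<^sup>2 = 1"
  shows "mat k k (\<lambda>(p,l). G c s a b p l) \<in> orth_group k"
proof -
  let ?R = "mat k k (\<lambda>(p,l). G c s a b p l)"
  have c1: "transpose_mat ?R \<in> carrier_mat k k" "?R \<in> carrier_mat k k" by auto
  have "transpose_mat ?R * ?R = 1\<^sub>m k"
  proof (rule eq_matI)
    fix p q assume pq: "p < dim_row (1\<^sub>m k)" "q < dim_col (1\<^sub>m k)"
    then show "(transpose_mat ?R * ?R) $$ (p,q) = 1\<^sub>m k $$ (p,q)"
      using G_RTR[OF assms, of p q] by (simp add: mult_entry[OF c1] del: index_mult_mat(1))
  qed auto
  then show ?thesis by (auto simp: orth_group_def stiefel_def)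
qed

lemma one_orth: "1\<^sub>m k \<in> orth_group k"
  by (auto simp: orth_group_def stiefel_def)

lemma inf_char:
  fixes f :: "real mat \<Rightarrow> real"
  assumes "x \<in> S" "\<And>y. y\<in>S \<Longrightarrow> 0 \<le> f y"
  shows "(f x = (INF y\<in>S. f y)) \<longleftrightarrow> (\<forall>y\<in>S. f x \<le> f y)"
proof
  have bdd: "bdd_below (f ` S)" using assms(2) by (intro bdd_belowI[of _ 0]) auto
  assume "f x = (INF y\<in>S. f y)"
  then show "\<forall>y\<in>S. f x \<le> f y" using cINF_lower[OF bdd] by auto
next
  have bdd: "bdd_below (f ` S)" using assms(2) by (intro bdd_belowI[of _ 0]) auto
  assume h: "\<forall>y\<in>S. f x \<le> f y"
  have "(INF y\<in>S. f y) \<le> f x" using cINF_lower[OF bdd assms(1)] .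
  moreover have "f x \<le> (INF y\<in>S. f y)" using assms(1) h by (intro cINF_greatest) auto
  ultimately show "f x = (INF y\<in>S. f y)" by simp
qed

lemma Mset_elim:
  assumes "z \<in> Mset pngs m j" "j < m"
  shows "\<exists>v a. z = stack v a \<and> v \<in> stiefel (m-j) (m+1) \<and> a \<in> carrier_vec (m-j)"
proof (cases "j = 0")
  case True
  then show ?thesis using assms unfolding Mset_def by auto
next
  case False
  show ?thesis
  proof (cases pngs)
    case True
    then obtain v where "z = stack v (0\<^sub>v (m-j))" "v \<in> stiefel (m-j) (m+1)"
      using assms False unfolding Mset_def by auto
    moreover have "0\<^sub>v (m-j) \<in> carrier_vec (m-j)" by simp
    ultimately show ?thesis by blast
  next
    case f2: False
    then show ?thesis using assms False unfolding Mset_def by auto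
  qed
qed

lemma stack_carrier:
  assumes "v \<in> stiefel k (m+1)"
  shows "stack v a \<in> carrier_mat (m+2) k"
proof -
  have v: "dim_row v = m+1" "dim_col v = k" using assms by (auto simp: stiefel_def)
  show ?thesis unfolding stack_def carrier_mat_def using v by simp
qed

lemma stack_idx:
  assumes "v \<in> stiefel k (m+1)" "i < m+1" "l < k"
  shows "stack v a $$ (i,l) = v $$ (i,l)"
proof -
  have v: "dim_row v = m+1" "dim_col v = k" using assms by (auto simp: stiefel_def)
  show ?thesis unfolding stack_def using v assms by simp
qed

lemma stiefel_VTV:
  fixes v :: "real mat"
  assumes "v \<in> stiefel k N" "p<k" "q<k"
  shows "(\<Sum>i<N. v $$ (i,p) * v $$ (i,q)) = (if p = q then 1 else 0)"
proof -
  have v: "v \<in> carrier_mat N k" "transpose_mat v * v = 1\<^sub>m k"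
    using assms(1) by (auto simp: stiefel_def)
  have c1: "transpose_mat v \<in> carrier_mat k N" using v by auto
  have "(\<Sum>i<N. v $$ (i,p) * v $$ (i,q)) = (transpose_mat v * v) $$ (p,q)"
    by (subst mult_entry[OF c1 v(1) assms(2,3)]) (intro sum.cong, use v(1) assms in auto)
  also have "\<dots> = (if p = q then 1 else 0)" using v(2) assms by simp
  finally show ?thesis .
qed

theorem corollary2p7:
  fixes m j :: nat and pngs :: bool and z' :: "real mat"
  assumes "m \<ge> 1" and "j < m" and "z' \<in> Mset pngs m j"
  shows "\<exists>\<epsilon>>0. \<forall>z \<in> Mset pngs m j. frob_norm (z - z') < \<epsilon> \<longrightarrow>
           (optimal_position z z' \<longleftrightarrow>
            transpose_mat z * z' - transpose_mat z' * z = 0\<^sub>m (m-j) (m-j))"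
proof (intro exI[of _ 1] conjI ballI impI)
  define k where "k = m - j"
  define n where "n = m + 2"
  obtain v' a' where z'd: "z' = stack v' a'" and v': "v' \<in> stiefel k (m+1)"
    using Mset_elim[OF assms(3) assms(2)] unfolding k_def by blast
  have z'c: "z' \<in> carrier_mat n k" using stack_carrier[OF v'] z'd by (simp add: n_def)
  fix z assume zM: "z \<in> Mset pngs m j" and close: "frob_norm (z - z') < 1"
  obtain v a where zd: "z = stack v a" and v: "v \<in> stiefel k (m+1)"
    using Mset_elim[OF zM assms(2)] unfolding k_def by blast
  have zc: "z \<in> carrier_mat n k" using stack_carrier[OF v] zd by (simp add: n_def)
  let ?Z' = "\<lambda>i l. z' $$ (i,l)"
  let ?Z = "\<lambda>i l. z $$ (i,l)"
  let ?D = "\<lambda>p l. if p = l then 1 else (0::real)"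
  have dc: "dim_col z = k" using zc by simp
  have opt: "optimal_position z z' \<longleftrightarrow> (\<forall>R\<in>orth_group k. frob_norm (z' - z) \<le> frob_norm (z' - z * R))"
  proof -
    have "optimal_position z z' \<longleftrightarrow> (frob_norm (z' - z * 1\<^sub>m k) = (INF R \<in> orth_group k. frob_norm (z' - z * R)))"
      unfolding optimal_position_def dc using zc by (simp add: right_mult_one_mat)
    also have "\<dots> \<longleftrightarrow> (\<forall>R\<in>orth_group k. frob_norm (z' - z * 1\<^sub>m k) \<le> frob_norm (z' - z * R))"
      by (rule inf_char[OF one_orth]) (simp add: frob_norm_def sum_nonneg)
    finally show ?thesis using zc by (simp add: right_mult_one_mat)
  qed
  have tc: "(transpose_mat z * z' - transpose_mat z' * z = 0\<^sub>m (m-j) (m-j)) \<longleftrightarrow>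
    (\<forall>p q. p<k \<longrightarrow> q<k \<longrightarrow> AA ?Z' ?Z n p q = AA ?Z' ?Z n q p)"
    using transp_cond[OF zc z'c] unfolding k_def .
  show "optimal_position z z' \<longleftrightarrow> transpose_mat z * z' - transpose_mat z' * z = 0\<^sub>m (m-j) (m-j)"
  proof
    assume o: "optimal_position z z'"
    show "transpose_mat z * z' - transpose_mat z' * z = 0\<^sub>m (m-j) (m-j)"
      unfolding tc
    proof (rule ccontr)
      assume "\<not> (\<forall>p q. p<k \<longrightarrow> q<k \<longrightarrow> AA ?Z' ?Z n p q = AA ?Z' ?Z n q p)"
      then obtain p q where pq: "p<k" "q<k" "AA ?Z' ?Z n p q \<noteq> AA ?Z' ?Z n q p" by blast
      then have ne: "p \<noteq> q" by auto
      obtain c s where cs: "c\<^sup>2 + s\<^sup>2 = 1" and lt: "SS ?Z' ?Z (G c s p q) n k < SS ?Z' ?Z ?D n k"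
        using dir1[OF ne pq] by blast
      let ?R = "mat k k (\<lambda>(p',l). G c s p q p' l)"
      have Ro: "?R \<in> orth_group k" using G_orth[OF ne pq(1,2) cs] .
      have "frob_norm (z' - z * ?R) = sqrt (SS ?Z' ?Z (\<lambda>i l. ?R $$ (i,l)) n k)"
        using zc z'c by (intro frob_SS) auto
      also have "SS ?Z' ?Z (\<lambda>i l. ?R $$ (i,l)) n k = SS ?Z' ?Z (G c s p q) n k"
        by (rule SS_cong) auto
      also have "sqrt (SS ?Z' ?Z (G c s p q) n k) < sqrt (SS ?Z' ?Z ?D n k)" using lt by simp
      also have "\<dots> = frob_norm (z' - z)" using frob_SS1[OF zc z'c] by simp
      finally show False using o Ro unfolding opt by fastforce
    qed
  next
    assume t: "transpose_mat z * z' - transpose_mat z' * z = 0\<^sub>m (m-j) (m-j)"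
    have sym: "\<And>p q. p<k \<Longrightarrow> q<k \<Longrightarrow> AA ?Z' ?Z n p q = AA ?Z' ?Z n q p" using t unfolding tc by blast
    have cl: "(\<Sum>i<n. \<Sum>p<k. (?Z i p - ?Z' i p)\<^sup>2) \<le> 1"
    proof -
      have "sqrt (\<Sum>i<n. \<Sum>p<k. (?Z i p - ?Z' i p)\<^sup>2) < 1" using close frob_diff[OF zc z'c] by simp
      then have "sqrt (\<Sum>i<n. \<Sum>p<k. (?Z i p - ?Z' i p)\<^sup>2) < sqrt 1" by simp
      then have "(\<Sum>i<n. \<Sum>p<k. (?Z i p - ?Z' i p)\<^sup>2) < 1" by (simp only: real_sqrt_less_iff)
      then show ?thesis by simp
    qed
    have lower: "(\<Sum>p<k. (x p)\<^sup>2) \<le> (\<Sum>i<n. (\<Sum>p<k. ?Z' i p * x p)\<^sup>2)" for x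
    proof -
      have "(\<Sum>p<k. (x p)\<^sup>2) = (\<Sum>i<m+1. (\<Sum>p<k. v' $$ (i,p) * x p)\<^sup>2)"
        by (rule norm_pres[symmetric]) (rule stiefel_VTV[OF v'])
      also have "\<dots> = (\<Sum>i<m+1. (\<Sum>p<k. ?Z' i p * x p)\<^sup>2)"
        by (intro sum.cong refl) (simp add: z'd stack_idx[OF v'])
      also have "\<dots> \<le> (\<Sum>i<n. (\<Sum>p<k. ?Z' i p * x p)\<^sup>2)"
        unfolding n_def by (intro sum_mono2) auto
      finally show ?thesis .
    qed
    show "optimal_position z z'"
      unfolding opt
    proof
      fix R assume Ro: "R \<in> orth_group k"
      have Rc: "R \<in> carrier_mat k k" using Ro by (auto simp: orth_group_def stiefel_def)
      have "SS ?Z' ?Z ?D n k \<le> SS ?Z' ?Z (\<lambda>i l. R $$ (i,l)) n k"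
        by (rule dir2) (use orth_RRT[OF Ro] orth_RTR[OF Ro] sym psd[OF cl lower] in auto)
      then show "frob_norm (z' - z) \<le> frob_norm (z' - z * R)"
        using frob_SS1[OF zc z'c] frob_SS[OF zc z'c Rc] by simp
    qed
  qed
qed (simp)

end
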